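(* Let $m\ge 2$ and $n\ge 1$ be integers. Then either $\mu(n+m,m)=\mu(n+m,m-1)$, or $$\mu(n+m,m)\ge \mu(n,m)+\nu(m,m)=\mu(n,m)+\lceil m/2\rceil.$$
   Context: Let $\mathbb F_2=\{0,1\}$ be the field with two elements. For $u\in\mathbb F_2^n$, $|u|$ denotes the Hamming weight of $u$. A wiring on $n$ vertices is a matrix $W=(w_{i,j})\in M(n,n;\mathbb F_2)$ with $w_{i,i}=1$ for all $i$. The degree of vertex $j$ is the number of $1$s in the $j$th column of $W$, and $\deg(W)$ is the maximum degree over all vertices. For $c\in\mathbb F_2^n$, $M(W,c)=\max\{|Wx+c| : x\in\mathbb F_2^n\}$. For $n,m\ge1$, $A(n,m)$ is the set of wirings on $n$ vertices with $\deg(W)\le m$. Define $\mu(n,m)=\min\{M(W,0): W\in A(n,m)\}$ and $\nu(n,m)=\min\{M(W,c): W\in A(n,m),\ c\in\mathbb F_2^n\}$. *)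

theory Defs
  imports Complex_Main
begin

text \<open>We model F_2 by bool (False = 0, True = 1, addition = xor, i.e. (\<noteq>)).
  Matrices in M(n,n;F_2) are functions nat \<Rightarrow> nat \<Rightarrow> bool whose entries
  vanish outside {0..<n} x {0..<n}; vectors in F_2^n are functions nat \<Rightarrow> bool
  vanishing outside {0..<n}.\<close>

definition vecs :: "nat \<Rightarrow> (nat \<Rightarrow> bool) set" where
  "vecs n = {x. \<forall>i. n \<le> i \<longrightarrow> \<not> x i}"

definition mats :: "nat \<Rightarrow> (nat \<Rightarrow> nat \<Rightarrow> bool) set" where
  "mats n = {W. \<forall>i j. (n \<le> i \<or> n \<le> j) \<longrightarrow> \<not> W i j}"

definition hweight :: "nat \<Rightarrow> (nat \<Rightarrow> bool) \<Rightarrow> nat" where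
  "hweight n u = card {i. i < n \<and> u i}"

definition mulv :: "nat \<Rightarrow> (nat \<Rightarrow> nat \<Rightarrow> bool) \<Rightarrow> (nat \<Rightarrow> bool) \<Rightarrow> (nat \<Rightarrow> bool)" where
  "mulv n W x = (\<lambda>i. i < n \<and> odd (card {j. j < n \<and> W i j \<and> x j}))"

definition addv :: "(nat \<Rightarrow> bool) \<Rightarrow> (nat \<Rightarrow> bool) \<Rightarrow> (nat \<Rightarrow> bool)" where
  "addv u v = (\<lambda>i. u i \<noteq> v i)"

definition wiring :: "nat \<Rightarrow> (nat \<Rightarrow> nat \<Rightarrow> bool) \<Rightarrow> bool" where
  "wiring n W \<longleftrightarrow> W \<in> mats n \<and> (\<forall>i<n. W i i)"

definition vdeg :: "nat \<Rightarrow> (nat \<Rightarrow> nat \<Rightarrow> bool) \<Rightarrow> nat \<Rightarrow> nat" where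
  "vdeg n W j = card {i. i < n \<and> W i j}"

definition wdeg :: "nat \<Rightarrow> (nat \<Rightarrow> nat \<Rightarrow> bool) \<Rightarrow> nat" where
  "wdeg n W = Max ((vdeg n W) ` {0..<n})"

definition MW :: "nat \<Rightarrow> (nat \<Rightarrow> nat \<Rightarrow> bool) \<Rightarrow> (nat \<Rightarrow> bool) \<Rightarrow> nat" where
  "MW n W c = Max {hweight n (addv (mulv n W x) c) | x. x \<in> vecs n}"

definition Aset :: "nat \<Rightarrow> nat \<Rightarrow> (nat \<Rightarrow> nat \<Rightarrow> bool) set" where
  "Aset n m = {W. wiring n W \<and> wdeg n W \<le> m}"

definition mu :: "nat \<Rightarrow> nat \<Rightarrow> nat" where
  "mu n m = Min {MW n W (\<lambda>_. False) | W. W \<in> Aset n m}"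

definition nu :: "nat \<Rightarrow> nat \<Rightarrow> nat" where
  "nu n m = Min {MW n W c | W c. W \<in> Aset n m \<and> c \<in> vecs n}"

end

theory Submission
  imports Defs
begin

lemma finite_vecs: "finite (vecs n)"
proof -
  have "vecs n \<subseteq> (\<lambda>S i. i \<in> S) ` Pow {..<n}"
  proof
    fix x assume "x \<in> vecs n"
    then have "x = (\<lambda>i. i \<in> {i. i < n \<and> x i})" by (auto simp: vecs_def not_le[symmetric])
    moreover have "{i. i < n \<and> x i} \<in> Pow {..<n}" by auto
    ultimately show "x \<in> (\<lambda>S i. i \<in> S) ` Pow {..<n}" by blast
  qed
  then show ?thesis by (rule finite_subset) auto
qed

lemma zero_vecs: "(\<lambda>_. False) \<in> vecs n" by (simp add: vecs_def)

lemma hweight_le: "hweight n u \<le> n"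
proof -
  have "card {i. i < n \<and> u i} \<le> card {..<n}" by (rule card_mono) auto
  then show ?thesis by (simp add: hweight_def)
qed

lemma MW_set_fin: "finite {hweight n (addv (mulv n W x) c) | x. x \<in> vecs n}"
  by (rule finite_subset[of _ "{0..n}"]) (auto simp: hweight_le)

lemma MW_ge: "x \<in> vecs n \<Longrightarrow> hweight n (addv (mulv n W x) c) \<le> MW n W c"
  unfolding MW_def by (rule Max_ge[OF MW_set_fin]) blast

lemma MW_att: "\<exists>x \<in> vecs n. MW n W c = hweight n (addv (mulv n W x) c)"
proof -
  have "MW n W c \<in> {hweight n (addv (mulv n W x) c) | x. x \<in> vecs n}"
    unfolding MW_def by (rule Max_in[OF MW_set_fin]) (use zero_vecs in blast)
  then show ?thesis by blast
qed

lemma MW_le: "MW n W c \<le> n"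
  using MW_att[of n W c] hweight_le by auto

lemma mu_set_fin: "finite {MW n W (\<lambda>_. False) | W. W \<in> Aset n m}"
  by (rule finite_subset[of _ "{0..n}"]) (auto simp: MW_le)

lemma mu_le: "W \<in> Aset n m \<Longrightarrow> mu n m \<le> MW n W (\<lambda>_. False)"
  unfolding mu_def by (rule Min_le[OF mu_set_fin]) blast

lemma vdeg_le_wdeg: "j < n \<Longrightarrow> vdeg n W j \<le> wdeg n W"
  unfolding wdeg_def by (rule Max_ge) auto

lemma wdeg_le_iff: "n \<ge> 1 \<Longrightarrow> wdeg n W \<le> k \<longleftrightarrow> (\<forall>j<n. vdeg n W j \<le> k)"
  unfolding wdeg_def by (subst Max_le_iff) auto

lemma id_Aset: assumes "n \<ge> 1" "m \<ge> 1" shows "(\<lambda>i j. i < n \<and> i = j) \<in> Aset n m"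
proof -
  have "vdeg n (\<lambda>i j. i < n \<and> i = j) j \<le> m" if "j < n" for j
  proof -
    have "{i. i < n \<and> i < n \<and> i = j} = {j}" using that by auto
    then show ?thesis using assms by (simp add: vdeg_def)
  qed
  then show ?thesis using assms
    by (auto simp: Aset_def wiring_def mats_def wdeg_le_iff)
qed

lemma mu_att: assumes "n \<ge> 1" "m \<ge> 1" shows "\<exists>W \<in> Aset n m. mu n m = MW n W (\<lambda>_. False)"
proof -
  have "mu n m \<in> {MW n W (\<lambda>_. False) | W. W \<in> Aset n m}"
    unfolding mu_def by (rule Min_in[OF mu_set_fin]) (use id_Aset[OF assms] in blast)
  then show ?thesis by blast
qed

lemma card_flip:
  fixes n i k :: nat and W :: "nat \<Rightarrow> nat \<Rightarrow> bool"
  assumes "i < n"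
  shows "odd (card {j. j<n \<and> W k j \<and> (x(i := \<not> x i)) j}) =
    (if W k i then \<not> odd (card {j. j<n \<and> W k j \<and> x j}) else odd (card {j. j<n \<and> W k j \<and> x j}))"
proof -
  let ?B = "{j. j<n \<and> W k j \<and> x j}"
  have fB: "finite ?B" by (rule finite_subset[of _ "{..<n}"]) auto
  show ?thesis
  proof (cases "W k i")
    case False
    then have "{j. j<n \<and> W k j \<and> (x(i := \<not> x i)) j} = ?B" by auto
    then show ?thesis using False by simp
  next
    case True
    show ?thesis
    proof (cases "x i")
      case xi: True
      then have e: "{j. j<n \<and> W k j \<and> (x(i := \<not> x i)) j} = ?B - {i}" by auto
      have "i \<in> ?B" using xi True assms by auto
      then have "card (?B - {i}) = card ?B - 1" "card ?B \<ge> 1"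
        using fB by (auto simp: card_gt_0_iff Suc_le_eq)
      then show ?thesis using True e by auto
    next
      case xi: False
      then have e: "{j. j<n \<and> W k j \<and> (x(i := \<not> x i)) j} = insert i ?B" using True assms by auto
      have "i \<notin> ?B" using xi by auto
      then have "card (insert i ?B) = Suc (card ?B)" using fB by simp
      then show ?thesis using True e by auto
    qed
  qed
qed

lemma mulv_flip:
  assumes "i < n"
  shows "mulv n W (x(i := \<not> x i)) k = (if k < n \<and> W k i then \<not> mulv n W x k else mulv n W x k)"
  using card_flip[OF assms, of W k x] by (auto simp: mulv_def)

lemma card_sum: fixes m :: nat shows "card {i. i < m \<and> u i} = (\<Sum>i<m. if u i then 1 else 0::nat)"
proof (induction m)
  case 0 then show ?case by simp
next
  case (Suc m)
  show ?case
  proof (cases "u m")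
    case True
    then have "{i. i < Suc m \<and> u i} = insert m {i. i < m \<and> u i}" by auto
    then show ?thesis using Suc True by simp
  next
    case False
    then have "{i. i < Suc m \<and> u i} = {i. i < m \<and> u i}" using less_Suc_eq by auto
    then show ?thesis using Suc False by simp
  qed
qed

lemma sum_ind: "finite A \<Longrightarrow> (\<Sum>x\<in>A. if P x then 1 else 0::nat) = card {x\<in>A. P x}"
  by (simp add: sum.If_cases Int_def)

lemma half_count:
  assumes W: "wiring m W" and i: "i < m"
  shows "2 * card {x \<in> vecs m. addv (mulv m W x) c i} = card (vecs m)"
proof -
  let ?V = "vecs m" and ?F = "\<lambda>x. addv (mulv m W x) c"
  let ?A = "{x \<in> ?V. ?F x i}"
  define fl where "fl = (\<lambda>x::nat\<Rightarrow>bool. x(i := \<not> x i))"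
  have Wii: "W i i" using W i by (simp add: wiring_def)
  have flfl: "fl (fl x) = x" for x by (simp add: fl_def)
  have flV: "fl x \<in> ?V" if "x \<in> ?V" for x using that i by (auto simp: fl_def vecs_def)
  have flF: "?F (fl x) i = (\<not> ?F x i)" for x
    unfolding fl_def addv_def using mulv_flip[OF i, of W x i] Wii i by auto
  have "bij_betw fl ?A (?V - ?A)"
    by (rule bij_betw_byWitness[where f'=fl]) (auto simp: flfl flV flF)
  then have c1: "card ?A = card (?V - ?A)" by (rule bij_betw_same_card)
  have "card ?V = card ?A + card (?V - ?A)"
    using finite_vecs[of m] by (metis (no_types, lifting) card_Diff_subset card_mono le_add_diff_inverse mem_Collect_eq subsetI finite_subset)
  then show ?thesis using c1 by simp
qed

lemma avg:
  assumes W: "wiring m W"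
  shows "\<exists>x\<in>vecs m. m - m div 2 \<le> hweight m (addv (mulv m W x) c)"
proof (rule ccontr)
  let ?V = "vecs m" and ?F = "\<lambda>x. addv (mulv m W x) c"
  assume "\<not> ?thesis"
  then have lt: "\<And>x. x \<in> ?V \<Longrightarrow> hweight m (?F x) + 1 \<le> m - m div 2" by force
  then have m0: "m \<ge> 1" using zero_vecs by fastforce
  have fV: "finite ?V" by (rule finite_vecs)
  have cV: "card ?V > 0" using fV zero_vecs card_gt_0_iff by blast
  have "2 * (\<Sum>x\<in>?V. hweight m (?F x)) = 2 * (\<Sum>x\<in>?V. \<Sum>i<m. if ?F x i then 1 else 0)"
    by (simp add: hweight_def card_sum)
  also have "\<dots> = 2 * (\<Sum>i<m. \<Sum>x\<in>?V. if ?F x i then 1 else 0)"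
    by (subst sum.swap) rule
  also have "\<dots> = (\<Sum>i<m. 2 * card {x \<in> ?V. ?F x i})"
    by (simp add: sum_ind[OF fV] sum_distrib_left)
  also have "\<dots> = (\<Sum>i<m. card ?V)"
    by (rule sum.cong) (auto simp: half_count[OF W])
  also have "\<dots> = m * card ?V" by simp
  finally have eq: "2 * (\<Sum>x\<in>?V. hweight m (?F x)) = m * card ?V" .
  have "(\<Sum>x\<in>?V. hweight m (?F x) + 1) \<le> (\<Sum>x\<in>?V. m - m div 2)"
    by (rule sum_mono) (rule lt)
  then have "(\<Sum>x\<in>?V. hweight m (?F x)) + card ?V \<le> card ?V * (m - m div 2)"
    by (simp only: sum.distrib) simp
  then have "2 * (\<Sum>x\<in>?V. hweight m (?F x)) + 2 * card ?V \<le> card ?V * (2 * (m - m div 2))"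
    by simp
  moreover have "2 * (m - m div 2) \<le> m + 1" by linarith
  ultimately have "m * card ?V + 2 * card ?V \<le> card ?V * (m + 1)"
    using eq by (metis (no_types, lifting) le_trans mult_le_mono2)
  then show False using cV by (simp add: algebra_simps)
qed

lemma nu_eq:
  assumes m: "m \<ge> 1"
  shows "nu m m = m - m div 2"
proof -
  let ?S = "{MW m W c | W c. W \<in> Aset m m \<and> c \<in> vecs m}"
  define W1 where "W1 = (\<lambda>i j. i < m \<and> j < m)"
  define c1 where "c1 = (\<lambda>i::nat. i < m div 2)"
  have fin: "finite ?S" by (rule finite_subset[of _ "{0..m}"]) (auto simp: MW_le)
  have vd: "vdeg m W1 j \<le> m" for j
  proof -
    have "card {i. i < m \<and> W1 i j} \<le> card {..<m}" by (rule card_mono) auto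
    then show ?thesis by (simp add: vdeg_def)
  qed
  have W1A: "W1 \<in> Aset m m" using m vd
    by (auto simp: Aset_def wiring_def mats_def W1_def wdeg_le_iff)
  have c1V: "c1 \<in> vecs m" by (auto simp: c1_def vecs_def)
  have up: "MW m W1 c1 \<le> m - m div 2"
  proof -
    obtain x where "x \<in> vecs m" and e: "MW m W1 c1 = hweight m (addv (mulv m W1 x) c1)"
      using MW_att by blast
    show ?thesis
    proof (cases "odd (card {j. j < m \<and> x j})")
      case True
      have "{i. i < m \<and> addv (mulv m W1 x) c1 i} = {m div 2..<m}"
        using True by (auto simp: addv_def mulv_def W1_def c1_def)
      then show ?thesis using e by (simp add: hweight_def)
    next
      case False
      have "{i. i < m \<and> addv (mulv m W1 x) c1 i} = {..<m div 2}"
        using False by (auto simp: addv_def mulv_def W1_def c1_def)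
      then show ?thesis using e by (simp add: hweight_def)
    qed
  qed
  have mem: "MW m W1 c1 \<in> ?S" using W1A c1V by blast
  have "nu m m \<le> m - m div 2"
    unfolding nu_def using Min_le[OF fin mem] up by linarith
  moreover have "nu m m \<in> ?S" unfolding nu_def using Min_in[OF fin] mem by blast
  then obtain W c where h: "nu m m = MW m W c" "W \<in> Aset m m" "c \<in> vecs m" by blast
  obtain x where "x \<in> vecs m" "m - m div 2 \<le> hweight m (addv (mulv m W x) c)"
    using avg[of m W c] h(2) by (auto simp: Aset_def)
  then have "nu m m \<ge> m - m div 2" using h(1) MW_ge[of x m W c] by linarith
  ultimately show ?thesis by linarith
qed

lemma ceil_half: "\<lceil>real m / 2\<rceil> = int (m - m div 2)"
proof (cases "even m")
  case True
  then obtain k where "m = 2 * k" by blast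
  then show ?thesis by simp
next
  case False
  then obtain k where k: "m = 2 * k + 1" using oddE by blast
  have "real m / 2 = real k + 1/2" using k by simp
  then have "\<lceil>real m / 2\<rceil> = int k + 1" by (simp add: ceiling_unique)
  then show ?thesis using k by simp
qed

lemma addv_F[simp]: "addv u (\<lambda>_. False) = u" by (simp add: addv_def)

lemma main_bound:
  assumes m: "m \<ge> 1" and n: "n \<ge> 1" and WA: "W0 \<in> Aset (n+m) m" and j: "j < n+m"
    and dj: "vdeg (n+m) W0 j = m"
  shows "mu n m + (m - m div 2) \<le> MW (n+m) W0 (\<lambda>_. False)"
proof -
  define N where "N = n + m"
  have wir: "wiring N W0" and wd: "wdeg N W0 \<le> m" using WA by (auto simp: Aset_def N_def)
  have diag: "\<And>i. i < N \<Longrightarrow> W0 i i" using wir by (simp add: wiring_def)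
  define S where "S = {i. i < N \<and> W0 i j}"
  define T where "T = {..<N} - S"
  have cS: "card S = m" using dj by (simp add: S_def vdeg_def N_def)
  have SN: "S \<subseteq> {..<N}" by (auto simp: S_def)
  have fS: "finite S" using SN finite_subset by blast
  have cT: "card T = n" unfolding T_def using card_Diff_subset[OF fS SN] cS by (simp add: N_def)
  have fT: "finite T" by (simp add: T_def)
  have jS: "j \<in> S" using j diag by (simp add: S_def N_def)
  obtain f where bij: "bij_betw f {0..<n} T" using ex_bij_betw_nat_finite[OF fT] cT by metis
  have finj: "inj_on f {0..<n}" and fim: "f ` {0..<n} = T" using bij by (auto simp: bij_betw_def)
  define g where "g = inv_into {0..<n} f"
  have gf: "\<And>k. k < n \<Longrightarrow> g (f k) = k" using finj by (simp add: g_def)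
  have fg: "\<And>p. p \<in> T \<Longrightarrow> f (g p) = p" using fim by (simp add: g_def f_inv_into_f)
  have gT: "\<And>p. p \<in> T \<Longrightarrow> g p < n" using fim by (metis atLeastLessThan_iff g_def inv_into_into)
  have fT': "\<And>k. k < n \<Longrightarrow> f k \<in> T" using fim by auto
  have TN: "\<And>p. p \<in> T \<Longrightarrow> p < N \<and> \<not> W0 p j" by (auto simp: T_def S_def)
  define W' where "W' = (\<lambda>i k. i < n \<and> k < n \<and> W0 (f i) (f k))"
  have W'A: "W' \<in> Aset n m"
  proof -
    have "vdeg n W' k \<le> m" if k: "k < n" for k
    proof -
      have "{i. i < n \<and> W' i k} \<subseteq> {i. i < n \<and> W0 (f i) (f k)}" by (auto simp: W'_def)
      have "card {i. i < n \<and> W' i k} = card (f ` {i. i < n \<and> W' i k})"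
        by (rule card_image[symmetric]) (rule inj_on_subset[OF finj], auto)
      also have "\<dots> \<le> card {p. p < N \<and> W0 p (f k)}"
        by (rule card_mono) (auto simp: W'_def dest: fT' TN)
      also have "\<dots> = vdeg N W0 (f k)" by (simp add: vdeg_def)
      also have "\<dots> \<le> wdeg N W0" by (rule vdeg_le_wdeg) (use TN fT' k in blast)
      finally show ?thesis using wd by (simp add: vdeg_def)
    qed
    moreover have "W' i i" if "i < n" for i using that diag fT' TN by (auto simp: W'_def)
    ultimately show ?thesis using n by (auto simp: Aset_def wiring_def mats_def W'_def wdeg_le_iff)
  qed
  obtain x' where x'V: "x' \<in> vecs n" and x'e: "MW n W' (\<lambda>_. False) = hweight n (mulv n W' x')"
    using MW_att[of n W' "\<lambda>_. False"] by auto
  have mu1: "mu n m \<le> hweight n (mulv n W' x')" using mu_le[OF W'A] x'e by simp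
  define x'' where "x'' = (\<lambda>p. p \<in> T \<and> x' (g p))"
  have key: "mulv N W0 x'' (f i) = mulv n W' x' i" if i: "i < n" for i
  proof -
    have "{q. q < N \<and> W0 (f i) q \<and> x'' q} = f ` {k. k < n \<and> W' i k \<and> x' k}"
    proof
      show "{q. q < N \<and> W0 (f i) q \<and> x'' q} \<subseteq> f ` {k. k < n \<and> W' i k \<and> x' k}"
      proof
        fix q assume q: "q \<in> {q. q < N \<and> W0 (f i) q \<and> x'' q}"
        then have qT: "q \<in> T" by (simp add: x''_def)
        then have "g q \<in> {k. k < n \<and> W' i k \<and> x' k}" using q i gT fg by (auto simp: W'_def x''_def)
        then show "q \<in> f ` {k. k < n \<and> W' i k \<and> x' k}" using fg[OF qT] by force
      qed
      show "f ` {k. k < n \<and> W' i k \<and> x' k} \<subseteq> {q. q < N \<and> W0 (f i) q \<and> x'' q}"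
        using fT' TN gf by (auto simp: W'_def x''_def)
    qed
    moreover have "card (f ` {k. k < n \<and> W' i k \<and> x' k}) = card {k. k < n \<and> W' i k \<and> x' k}"
      by (rule card_image) (rule inj_on_subset[OF finj], auto)
    moreover have "f i < N" using fT' TN i by blast
    ultimately show ?thesis by (simp add: mulv_def i)
  qed
  have hT: "card {p \<in> T. mulv N W0 x'' p} = hweight n (mulv n W' x')"
  proof -
    have "{p \<in> T. mulv N W0 x'' p} = f ` {i. i < n \<and> mulv n W' x' i}"
    proof
      show "{p \<in> T. mulv N W0 x'' p} \<subseteq> f ` {i. i < n \<and> mulv n W' x' i}"
      proof
        fix p assume p: "p \<in> {p \<in> T. mulv N W0 x'' p}"
        then have "g p \<in> {i. i < n \<and> mulv n W' x' i}" using gT key fg by (metis (mono_tags, lifting) mem_Collect_eq)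
        then show "p \<in> f ` {i. i < n \<and> mulv n W' x' i}" using p fg by force
      qed
      show "f ` {i. i < n \<and> mulv n W' x' i} \<subseteq> {p \<in> T. mulv N W0 x'' p}"
        using key fT' by auto
    qed
    moreover have "card (f ` {i. i < n \<and> mulv n W' x' i}) = card {i. i < n \<and> mulv n W' x' i}"
      by (rule card_image) (rule inj_on_subset[OF finj], auto)
    ultimately show ?thesis by (simp add: hweight_def)
  qed
  have split: "hweight N u = card {p \<in> T. u p} + card {p \<in> S. u p}" for u
  proof -
    have "{i. i < N \<and> u i} = {p \<in> T. u p} \<union> {p \<in> S. u p}" using SN by (auto simp: T_def)
    moreover have "{p \<in> T. u p} \<inter> {p \<in> S. u p} = {}" by (auto simp: T_def)
    ultimately show ?thesis using fT fS by (simp add: hweight_def card_Un_disjoint)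
  qed
  define y where "y = x''(j := \<not> x'' j)"
  have x''j: "\<not> x'' j" using jS by (simp add: x''_def T_def)
  have jN: "j < N" using j by (simp add: N_def)
  have my: "mulv N W0 y p = (if p < N \<and> W0 p j then \<not> mulv N W0 x'' p else mulv N W0 x'' p)" for p
    unfolding y_def by (rule mulv_flip[OF jN])
  have yT: "{p \<in> T. mulv N W0 y p} = {p \<in> T. mulv N W0 x'' p}" using TN my by auto
  have yS: "{p \<in> S. mulv N W0 y p} = S - {p \<in> S. mulv N W0 x'' p}" using my by (auto simp: S_def)
  have cyS: "card {p \<in> S. mulv N W0 y p} = m - card {p \<in> S. mulv N W0 x'' p}"
    unfolding yS using cS fS by (simp add: card_Diff_subset)
  have x''V: "x'' \<in> vecs N" using TN by (force simp: vecs_def x''_def)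
  have yV: "y \<in> vecs N" using x''V jN by (auto simp: vecs_def y_def)
  have "\<exists>z \<in> vecs N. mu n m + (m - m div 2) \<le> hweight N (mulv N W0 z)"
  proof (cases "m - m div 2 \<le> card {p \<in> S. mulv N W0 x'' p}")
    case True
    then show ?thesis using x''V split[of "mulv N W0 x''"] hT mu1 by (intro bexI[of _ x'']) auto
  next
    case False
    then show ?thesis using yV split[of "mulv N W0 y"] yT cyS hT mu1 by (intro bexI[of _ y]) auto
  qed
  then obtain z where "z \<in> vecs N" "mu n m + (m - m div 2) \<le> hweight N (mulv N W0 z)" by blast
  then show ?thesis using MW_ge[of z N W0 "\<lambda>_. False"] by (simp add: N_def)
qed

theorem lemma5p1:
  fixes n m :: nat
  assumes "m \<ge> 2" and "n \<ge> 1"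
  shows "mu (n + m) m = mu (n + m) (m - 1) \<or>
         (mu (n + m) m \<ge> mu n m + nu m m \<and>
          int (mu n m + nu m m) = int (mu n m) + \<lceil>real m / 2\<rceil>)"
proof -
  have m1: "m \<ge> 1" "m - 1 \<ge> 1" and N1: "n + m \<ge> 1" using assms by auto
  have nu: "nu m m = m - m div 2" using nu_eq m1(1) .
  have second: "int (mu n m + nu m m) = int (mu n m) + \<lceil>real m / 2\<rceil>"
    using nu ceil_half[of m] by simp
  have sub: "Aset (n+m) (m-1) \<subseteq> Aset (n+m) m" by (auto simp: Aset_def)
  obtain W1 where W1: "W1 \<in> Aset (n+m) (m-1)" "mu (n+m) (m-1) = MW (n+m) W1 (\<lambda>_. False)"
    using mu_att[OF N1 m1(2)] by blast
  have "W1 \<in> Aset (n+m) m" using W1(1) sub by blast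
  then have le1: "mu (n+m) m \<le> mu (n+m) (m-1)" using mu_le[of W1] W1(2) by simp
  show ?thesis
  proof (cases "mu (n + m) m = mu (n + m) (m - 1)")
    case True then show ?thesis by blast
  next
    case False
    obtain W0 where W0: "W0 \<in> Aset (n+m) m" "mu (n+m) m = MW (n+m) W0 (\<lambda>_. False)"
      using mu_att[OF N1 m1(1)] by blast
    have "\<exists>j<n+m. \<not> vdeg (n+m) W0 j \<le> m - 1"
    proof (rule ccontr)
      assume "\<not> ?thesis"
      then have "\<forall>j<n+m. vdeg (n+m) W0 j \<le> m - 1" by blast
      then have "wdeg (n+m) W0 \<le> m - 1" using wdeg_le_iff[OF N1] by blast
      then have "W0 \<in> Aset (n+m) (m-1)" using W0(1) by (simp add: Aset_def)
      then have "mu (n+m) (m-1) \<le> mu (n+m) m" using mu_le[of W0] W0(2) by simp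
      then show False using le1 False by simp
    qed
    then obtain j where j: "j < n+m" "\<not> vdeg (n+m) W0 j \<le> m - 1" by blast
    have "vdeg (n+m) W0 j \<le> m" using vdeg_le_wdeg[OF j(1), of W0] W0(1) by (auto simp: Aset_def)
    then have dj: "vdeg (n+m) W0 j = m" using j(2) by linarith
    have "mu n m + nu m m \<le> mu (n+m) m"
      using main_bound[OF m1(1) assms(2) W0(1) j(1) dj] W0(2) nu by linarith
    then show ?thesis using second by blast
  qed
qed

end
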